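(* Let $J^A_{k,n}$ be the number of maximal configurations resistant to altruists of length $n$ with exactly $k$ occupied lots (the empty configuration of length $0$ being counted once). Then, as formal power series, $$\sum_{n\ge 0}\sum_{k\ge 0} J^A_{k,n}x^ky^n = \frac{1+xy+x^2y^2+x^2y^3+x^3y^4}{1-x^2y^3-x^2y^4-x^3y^5} = \frac{1+xy+x^2y^2+x^2y^3+x^3y^4}{(1-xy^2-x^2y^3)(1+xy^2)}.$$
   Context: A configuration of length $n\ge 0$ is a binary string $c_1c_2\cdots c_n$; $c_k=1$ means lot $k$ is occupied by a house, $c_k=0$ that it is empty. A house at position $k$ is blocked if $2\le k\le n-1$ and $c_{k-1}=c_{k+1}=1$ (lots beyond the ends never obstruct sunlight). A configuration is permissible if no house is blocked; maximal if it is permissible and, for every $k$ with $c_k=0$, setting $c_k=1$ yields a non-permissible string. A maximal configuration is resistant to altruists if, for every $k$ with $c_k=0$, setting $c_k=1$ makes some house at a position $l\neq k$ blocked. *)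

theory Defs
  imports "HOL-Computational_Algebra.Formal_Power_Series"
begin

(* A configuration of length n is a bool list c of length n; lot c k is c_k (1-indexed). *)
definition lot :: "bool list \<Rightarrow> nat \<Rightarrow> bool" where
  "lot c k = c ! (k - 1)"

definition blocked :: "bool list \<Rightarrow> nat \<Rightarrow> bool" where
  "blocked c k \<longleftrightarrow> 2 \<le> k \<and> k + 1 \<le> length c \<and> lot c k \<and> lot c (k - 1) \<and> lot c (k + 1)"

definition permissible :: "bool list \<Rightarrow> bool" where
  "permissible c \<longleftrightarrow> (\<forall>k\<in>{1..length c}. \<not> blocked c k)"

definition occupy :: "bool list \<Rightarrow> nat \<Rightarrow> bool list" where
  "occupy c k = c[k - 1 := True]"

definition maximal :: "bool list \<Rightarrow> bool" where
  "maximal c \<longleftrightarrow> permissible c \<and>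
     (\<forall>k\<in>{1..length c}. \<not> lot c k \<longrightarrow> \<not> permissible (occupy c k))"

definition resistant :: "bool list \<Rightarrow> bool" where
  "resistant c \<longleftrightarrow> maximal c \<and>
     (\<forall>k\<in>{1..length c}. \<not> lot c k \<longrightarrow>
        (\<exists>l\<in>{1..length c}. l \<noteq> k \<and> blocked (occupy c k) l))"

definition occupied :: "bool list \<Rightarrow> nat" where
  "occupied c = length (filter id c)"

definition JA :: "nat \<Rightarrow> nat \<Rightarrow> nat" where
  "JA k n = card {c. length c = n \<and> resistant c \<and> occupied c = k}"

(* Bivariate formal power series as power series in y with coefficients power series in x:
   coefficient of x^k y^n is G $ n $ k. *)
definition GF :: "real fps fps" where
  "GF = Abs_fps (\<lambda>n. Abs_fps (\<lambda>k. of_nat (JA k n)))"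

abbreviation xv :: "real fps fps" where "xv \<equiv> fps_const fps_X"
abbreviation yv :: "real fps fps" where "yv \<equiv> fps_X"

end

theory Submission
  imports Defs
begin
unbundle fps_syntax

type_synonym st = "bool \<times> bool \<times> nat"

fun stp :: "st \<Rightarrow> bool \<Rightarrow> st option" where
  "stp (p2,p1,nd) b = (if b then (if p2 \<and> p1 then None else Some (p1,True,nd-1))
      else (if nd \<noteq> 0 then None else Some (p1,False, if p1 \<and> p2 then 0 else 2)))"

fun acc :: "st option \<Rightarrow> bool list \<Rightarrow> bool" where
  "acc None w = False"
| "acc (Some s) [] = (snd (snd s) = 0)"
| "acc (Some s) (b#w) = acc (stp s b) w"

definition NS :: "st option \<Rightarrow> nat \<Rightarrow> nat \<Rightarrow> bool list set" where
  "NS so k n = {w. length w = n \<and> acc so w \<and> occupied w = k}"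

definition Fo :: "st option \<Rightarrow> real fps fps" where
  "Fo so = Abs_fps (\<lambda>n. Abs_fps (\<lambda>k. of_nat (card (NS so k n))))"

lemma fin_NS: "finite (NS so k n)"
proof (rule finite_subset)
  show "NS so k n \<subseteq> {xs. set xs \<subseteq> (UNIV::bool set) \<and> length xs = n}" by (auto simp: NS_def)
  show "finite {xs. set xs \<subseteq> (UNIV::bool set) \<and> length xs = n}" by (rule finite_lists_length_eq) simp
qed

lemma NS_None: "NS None k n = {}" by (simp add: NS_def)

lemma NS_0: "NS (Some s) k 0 = (if snd (snd s) = 0 \<and> k = 0 then {[]} else {})"
  by (auto simp: NS_def occupied_def)

lemma occ_Cons: "occupied (b#w) = (if b then Suc (occupied w) else occupied w)"
  by (simp add: occupied_def)

lemma NS_Suc: "NS (Some s) k (Suc n) = Cons False ` NS (stp s False) k n \<union>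
   (if k = 0 then {} else Cons True ` NS (stp s True) (k-1) n)"
proof -
  have "w \<in> NS (Some s) k (Suc n) \<longleftrightarrow> w \<in> Cons False ` NS (stp s False) k n \<union>
   (if k = 0 then {} else Cons True ` NS (stp s True) (k-1) n)" for w
    by (cases w) (auto simp: NS_def occ_Cons)
  then show ?thesis by blast
qed

lemma card_NS_Suc: "card (NS (Some s) k (Suc n)) = card (NS (stp s False) k n) +
   (if k = 0 then 0 else card (NS (stp s True) (k-1) n))"
proof -
  have d: "Cons False ` A \<inter> Cons True ` B = {}" for A B :: "bool list set" by auto
  show ?thesis unfolding NS_Suc
    by (simp add: card_Un_disjoint d fin_NS card_image)
qed

lemma Fo_None: "Fo None = 0"
  by (rule fps_ext) (simp add: Fo_def NS_None fps_zero_def)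

lemma Fo_Some: "Fo (Some s) = (if snd (snd s) = 0 then 1 else 0) + yv * Fo (stp s False)
   + xv * yv * Fo (stp s True)"
proof (rule fps_ext)
  fix n
  show "Fo (Some s) $ n = ((if snd (snd s) = 0 then 1 else 0) + yv * Fo (stp s False)
   + xv * yv * Fo (stp s True)) $ n"
  proof (rule fps_ext)
    fix k
    show "Fo (Some s) $ n $ k = ((if snd (snd s) = 0 then 1 else 0) + yv * Fo (stp s False)
   + xv * yv * Fo (stp s True)) $ n $ k"
    proof (cases n)
      case 0
      then show ?thesis by (simp add: Fo_def NS_0 mult.assoc)
    next
      case (Suc m)
      then show ?thesis by (simp add: Fo_def card_NS_Suc mult.assoc)
    qed
  qed
qed


definition P1 :: "bool list \<Rightarrow> bool" where
  "P1 c \<longleftrightarrow> (\<forall>i. i+2 < length c \<longrightarrow> \<not>(c!i \<and> c!(i+1) \<and> c!(i+2)))"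

definition R :: "bool list \<Rightarrow> nat \<Rightarrow> bool" where
  "R c j \<longleftrightarrow> (2 \<le> j \<and> c!(j-1) \<and> c!(j-2)) \<or> (j+2 < length c \<and> c!(j+1) \<and> c!(j+2))"

definition P2 :: "bool list \<Rightarrow> bool" where
  "P2 c \<longleftrightarrow> (\<forall>j<length c. \<not> c!j \<longrightarrow> R c j)"

lemma blocked_idx: "blocked c l \<longleftrightarrow> 2 \<le> l \<and> l < length c \<and> c!(l-2) \<and> c!(l-1) \<and> c!l"
proof -
  have "2 \<le> l \<Longrightarrow> l + 1 - 1 = l \<and> l - 1 - 1 = l - 2" by auto
  then show ?thesis unfolding blocked_def lot_def by auto
qed

lemma perm_P1: "permissible c \<longleftrightarrow> P1 c"
proof
  assume p: "permissible c"
  show "P1 c" unfolding P1_def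
  proof (intro allI impI notI)
    fix i assume "i + 2 < length c" "c!i \<and> c!(i+1) \<and> c!(i+2)"
    then have "blocked c (i+2)" by (simp add: blocked_idx)
    moreover have "i+2 \<in> {1..length c}" using \<open>i + 2 < length c\<close> by auto
    ultimately show False using p unfolding permissible_def by blast
  qed
next
  assume p: "P1 c"
  show "permissible c" unfolding permissible_def
  proof (intro ballI notI)
    fix k assume "k \<in> {1..length c}" "blocked c k"
    then have "2 \<le> k" "k < length c" "c!(k-2)" "c!(k-1)" "c!k" by (auto simp: blocked_idx)
    moreover have "k-2+1 = k-1" "k-2+2 = k" using \<open>2 \<le> k\<close> by auto
    ultimately show False using p[unfolded P1_def, rule_format, of "k-2"] by auto
  qed
qed

lemma occ_block:
  assumes p: "P1 c" and j: "j < length c" "\<not> c!j"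
  shows "(\<exists>l\<in>{1..length c}. l \<noteq> j+1 \<and> blocked (c[j:=True]) l) \<longleftrightarrow> R c j"
proof
  assume "\<exists>l\<in>{1..length c}. l \<noteq> j+1 \<and> blocked (c[j:=True]) l"
  then obtain l where l: "l \<noteq> j+1" "blocked (c[j:=True]) l" by blast
  let ?d = "c[j:=True]"
  from l have l2: "2 \<le> l" "l < length c" "?d!(l-2)" "?d!(l-1)" "?d!l" by (auto simp: blocked_idx)
  have "l - 2 + 1 = l - 1" "l-2+2 = l" using l2 by auto
  show "R c j"
  proof (cases "j = l-2 \<or> j = l")
    case True
    then show ?thesis
    proof
      assume "j = l-2"
      then have "j+1 = l-1" "j+2 = l" using l2 by auto
      then show ?thesis using l2 j unfolding R_def by auto
    next
      assume "j = l"
      then have "j-1 = l-1" "j-2 = l-2" by auto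
      then show ?thesis using l2 j \<open>j = l\<close> l(1) unfolding R_def by auto
    qed
  next
    case False
    then have "c!(l-2)" "c!(l-1)" "c!l" using l2 l(1) by auto
    then show ?thesis using p[unfolded P1_def, rule_format, of "l-2"] l2 \<open>l - 2 + 1 = l - 1\<close> \<open>l-2+2 = l\<close>
      by auto
  qed
next
  assume r: "R c j"
  show "\<exists>l\<in>{1..length c}. l \<noteq> j+1 \<and> blocked (c[j:=True]) l"
  proof (cases "2 \<le> j \<and> c!(j-1) \<and> c!(j-2)")
    case True
    then have "blocked (c[j:=True]) j" using j by (auto simp: blocked_idx)
    moreover have "j \<in> {1..length c}" "j \<noteq> j+1" using True j by auto
    ultimately show ?thesis by blast
  next
    case False
    then have "j+2 < length c" "c!(j+1)" "c!(j+2)" using r unfolding R_def by auto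
    then have "blocked (c[j:=True]) (j+2)" using j by (auto simp: blocked_idx)
    moreover have "j+2 \<in> {1..length c}" "j+2 \<noteq> j+1" using \<open>j+2 < length c\<close> by auto
    ultimately show ?thesis by blast
  qed
qed

lemma resistant_P: "resistant c \<longleftrightarrow> P1 c \<and> P2 c"
proof
  assume r: "resistant c"
  then have p: "P1 c" unfolding resistant_def maximal_def by (simp add: perm_P1)
  have "P2 c" unfolding P2_def
  proof (intro allI impI)
    fix j assume j: "j < length c" "\<not> c!j"
    then have "j+1 \<in> {1..length c}" "\<not> lot c (j+1)" by (auto simp: lot_def)
    moreover have "occupy c (j+1) = c[j:=True]" by (simp add: occupy_def)
    ultimately have "\<exists>l\<in>{1..length c}. l \<noteq> j+1 \<and> blocked (c[j:=True]) l"
      using r unfolding resistant_def by metis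
    then show "R c j" using occ_block[OF p j] by blast
  qed
  then show "P1 c \<and> P2 c" using p by blast
next
  assume pp: "P1 c \<and> P2 c"
  then have p: "P1 c" and p2: "P2 c" by auto
  have key: "\<exists>l\<in>{1..length c}. l \<noteq> k \<and> blocked (occupy c k) l"
    if k: "k \<in> {1..length c}" "\<not> lot c k" for k
  proof -
    have j: "k-1 < length c" "\<not> c!(k-1)" "k - 1 + 1 = k" using k by (auto simp: lot_def)
    then have "R c (k-1)" using p2 unfolding P2_def by blast
    then show ?thesis using occ_block[OF p j(1,2)] j(3) unfolding occupy_def by auto
  qed
  have "\<not> permissible (occupy c k)" if k: "k \<in> {1..length c}" "\<not> lot c k" for k
    using key[OF k] unfolding permissible_def occupy_def by auto
  then show "resistant c" unfolding resistant_def maximal_def using key p perm_P1 by blast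
qed

lemma all_nat_split: "(\<forall>i::nat. P i) \<longleftrightarrow> P 0 \<and> (\<forall>i. P (Suc i))"
  by (metis not0_implies_Suc)

definition Q2 :: "bool list \<Rightarrow> bool" where
  "Q2 c \<longleftrightarrow> (\<forall>j. j+2 < length c \<longrightarrow> \<not> c!(j+2) \<longrightarrow>
      (c!(j+1) \<and> c!j) \<or> (j+4 < length c \<and> c!(j+3) \<and> c!(j+4)))"

lemma P1_Cons: "P1 (a#c) \<longleftrightarrow> (1 < length c \<longrightarrow> \<not>(a \<and> c!0 \<and> c!1)) \<and> P1 c"
  unfolding P1_def by (subst all_nat_split) (simp add: numeral_2_eq_2)

lemma Q2_Cons: "Q2 (a#c) \<longleftrightarrow> (1 < length c \<longrightarrow> \<not> c!1 \<longrightarrow> (c!0 \<and> a) \<or> (3 < length c \<and> c!2 \<and> c!3))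
   \<and> Q2 c"
  unfolding Q2_def by (subst all_nat_split) (simp add: numeral_2_eq_2 numeral_3_eq_3 eval_nat_numeral)

lemma P2_alt: "P2 c \<longleftrightarrow> (0 < length c \<longrightarrow> \<not>c!0 \<longrightarrow> (2 < length c \<and> c!1 \<and> c!2))
   \<and> (1 < length c \<longrightarrow> \<not>c!1 \<longrightarrow> (3 < length c \<and> c!2 \<and> c!3)) \<and> Q2 c"
  unfolding P2_def Q2_def R_def
  apply (subst all_nat_split)
  apply (subst all_nat_split)
  apply (simp add: numeral_2_eq_2 numeral_3_eq_3 eval_nat_numeral)
  done

definition T :: "bool list \<Rightarrow> bool" where "T c \<longleftrightarrow> P1 c \<and> Q2 c"

lemma T_Cons3: "T (a#p#b#w) \<longleftrightarrow> \<not>(a\<and>p\<and>b) \<and> (\<not>b \<longrightarrow> (p\<and>a) \<or> (1 < length w \<and> w!0 \<and> w!1))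
   \<and> T (p#b#w)"
  unfolding T_def P1_Cons Q2_Cons by auto

lemma T_FF: "T (False#False#c) \<longleftrightarrow> P1 c \<and> P2 c"
  unfolding T_def P1_Cons Q2_Cons P2_alt by auto

definition L :: "bool \<Rightarrow> bool \<Rightarrow> nat \<Rightarrow> bool list \<Rightarrow> bool" where
  "L p2 p1 nd w \<longleftrightarrow> T (p2#p1#w) \<and> (1 \<le> nd \<longrightarrow> w \<noteq> [] \<and> w!0) \<and> (2 \<le> nd \<longrightarrow> 1 < length w \<and> w!1)"

lemma T_Nil2: "T [a,b]"
  by (simp add: T_def P1_def Q2_def)

lemma acc_L: "nd \<le> 2 \<Longrightarrow> acc (Some (p2,p1,nd)) w \<longleftrightarrow> L p2 p1 nd w"
proof (induction w arbitrary: p2 p1 nd)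
  case Nil
  then show ?case by (auto simp: L_def T_Nil2)
next
  case (Cons b w)
  show ?case
  proof (cases b)
    case True
    have ih: "acc (Some (p1,True,nd-1)) w \<longleftrightarrow> L p1 True (nd-1) w" using Cons by simp
    have a: "acc (Some (p2,p1,nd)) (True#w) \<longleftrightarrow> \<not>(p2\<and>p1) \<and> acc (Some (p1,True,nd-1)) w" by simp
    have l: "L p2 p1 nd (True#w) \<longleftrightarrow> \<not>(p2\<and>p1) \<and> L p1 True (nd-1) w"
      using Cons.prems unfolding L_def T_Cons3 by (auto simp: nth_Cons')
    show ?thesis using a l ih True by simp
  next
    case False
    have ih: "acc (Some (p1,False,if p1 \<and> p2 then 0 else 2)) w \<longleftrightarrow> L p1 False (if p1 \<and> p2 then 0 else 2) w"
      using Cons by simp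
    have a: "acc (Some (p2,p1,nd)) (False#w) \<longleftrightarrow> nd = 0 \<and> acc (Some (p1,False,if p1 \<and> p2 then 0 else 2)) w" by simp
    have l: "L p2 p1 nd (False#w) \<longleftrightarrow> nd = 0 \<and> L p1 False (if p1 \<and> p2 then 0 else 2) w"
      unfolding L_def T_Cons3 by (auto simp: nth_Cons')
    show ?thesis using a l ih False by simp
  qed
qed

lemma resistant_acc: "resistant c \<longleftrightarrow> acc (Some (False,False,0)) c"
  using acc_L[of 0 False False c] by (simp add: L_def T_FF resistant_P)

lemma GF_Fo: "GF = Fo (Some (False,False,0))"
proof -
  have "{c. length c = n \<and> resistant c \<and> occupied c = k} = NS (Some (False,False,0)) k n" for k n
    by (auto simp: NS_def resistant_acc)
  then show ?thesis unfolding GF_def Fo_def JA_def by simp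
qed

lemma Fo_A_eq: "Fo (Some (False,False,0)) * (1 - xv^2*yv^3 - xv^2*yv^4 - xv^3*yv^5)
   = 1 + xv*yv + xv^2*yv^2 + xv^2*yv^3 + xv^3*yv^4"
proof -
  define A where "A = Fo (Some (False,False,0))"
  define B where "B = Fo (Some (False,True,0))"
  define C where "C = Fo (Some (False,False,2))"
  define C' where "C' = Fo (Some (True,False,2))"
  define D where "D = Fo (Some (False,True,1))"
  define E where "E = Fo (Some (True,True,0))"
  define H where "H = Fo (Some (True,False,0))"
  have eA: "A = 1 + yv * C + xv*yv*B" unfolding A_def B_def C_def by (subst Fo_Some) simp
  have eB: "B = 1 + yv * C' + xv*yv*E" unfolding B_def C'_def E_def by (subst Fo_Some) simp
  have eC: "C = xv*yv*D" unfolding C_def D_def by (subst Fo_Some) (simp add: Fo_None)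
  have eC': "C' = xv*yv*D" unfolding C'_def D_def by (subst Fo_Some) (simp add: Fo_None)
  have eD: "D = xv*yv*E" unfolding D_def E_def by (subst Fo_Some) (simp add: Fo_None)
  have eE: "E = 1 + yv*H" unfolding E_def H_def by (subst Fo_Some) (simp add: Fo_None)
  have eH: "H = 1 + yv * C + xv*yv*B" unfolding H_def B_def C_def by (subst Fo_Some) simp
  show ?thesis unfolding A_def[symmetric]
    using eA eB eC eC' eD eE eH by algebra
qed

lemma Q0: "(1 - xv^2*yv^3 - xv^2*yv^4 - xv^3*yv^5) $ 0 = 1"
  by (simp add: fps_mult_nth)

theorem mainTheorem5:
  shows "GF = (1 + xv*yv + xv^2*yv^2 + xv^2*yv^3 + xv^3*yv^4)
              * inverse (1 - xv^2*yv^3 - xv^2*yv^4 - xv^3*yv^5)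
       \<and> GF = (1 + xv*yv + xv^2*yv^2 + xv^2*yv^3 + xv^3*yv^4)
              * inverse ((1 - xv*yv^2 - xv^2*yv^3) * (1 + xv*yv^2))"
proof -
  let ?Q = "1 - xv^2*yv^3 - xv^2*yv^4 - xv^3*yv^5"
  have qi: "?Q * inverse ?Q = 1"
  proof -
    have "inverse ?Q = fps_right_inverse ?Q (inverse (?Q $ 0))"
      by (simp add: fps_inverse_def)
    moreover have "?Q $ 0 * inverse (?Q $ 0) = 1" by (simp add: Q0)
    ultimately show ?thesis using fps_right_inverse by metis
  qed
  have g1: "GF = (1 + xv*yv + xv^2*yv^2 + xv^2*yv^3 + xv^3*yv^4) * inverse ?Q"
  proof -
    have gq: "GF * ?Q = 1 + xv*yv + xv^2*yv^2 + xv^2*yv^3 + xv^3*yv^4"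
      using Fo_A_eq GF_Fo by simp
    have "GF = GF * (?Q * inverse ?Q)" by (simp only: qi mult_1_right)
    also have "\<dots> = (GF * ?Q) * inverse ?Q" by (simp only: mult.assoc)
    also have "\<dots> = (1 + xv*yv + xv^2*yv^2 + xv^2*yv^3 + xv^3*yv^4) * inverse ?Q" by (simp only: gq)
    finally show ?thesis .
  qed
  have "(1 - xv*yv^2 - xv^2*yv^3) * (1 + xv*yv^2) = ?Q"
    by (simp add: algebra_simps power2_eq_square power3_eq_cube eval_nat_numeral)
  then show ?thesis using g1 by simp
qed

end
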